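(* Let $k$ be a positive integer and let $G$ be an $n$-vertex connected graph with $\operatorname{diam}(G)\ge k+1$ and minimum degree $\delta$. Let $S$ be a $k$-independent set in $G$, and let $i$ be an integer with $3\le i\le \frac{k}{2}-1$. Then $$|N^{i-1}(S)|+|N^i(S)|+|N^{i+1}(S)|\ge 3|S|,$$ and, if $\delta\ge 2$, $$|N^{i-1}(S)|+|N^i(S)|+|N^{i+1}(S)|\ge (\delta+1)|S|.$$
   Context: All graphs are finite, simple and undirected. For vertices $u,v$, $d(u,v)$ is the length of a shortest $u$–$v$ path, and $\operatorname{diam}(G)$ is the maximum distance between two vertices. For a nonnegative integer $k$, a $k$-independent set in $G$ is a set $S\subseteq V(G)$ such that any two distinct vertices of $S$ are at distance greater than $k$. For $S\subseteq V(G)$, $N(S)$ denotes the set of vertices adjacent to some vertex of $S$. Set $N^0(S)=S$, $N^1(S)=N(S)$, and for $j\ge 2$, $N^j(S)=N(N^{j-1}(S))\setminus\bigl(N^{j-2}(S)\cup N^{j-1}(S)\bigr)$. *)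

theory Defs
  imports Main
begin

definition simple_graph :: "'a set \<Rightarrow> ('a \<Rightarrow> 'a \<Rightarrow> bool) \<Rightarrow> bool" where
  "simple_graph V E \<longleftrightarrow> finite V \<and> (\<forall>u v. E u v \<longrightarrow> u \<in> V \<and> v \<in> V)
     \<and> (\<forall>u v. E u v \<longrightarrow> E v u) \<and> (\<forall>u. \<not> E u u)"

definition walk_of_len :: "('a \<Rightarrow> 'a \<Rightarrow> bool) \<Rightarrow> 'a \<Rightarrow> 'a \<Rightarrow> nat \<Rightarrow> bool" where
  "walk_of_len E u v n \<longleftrightarrow> (\<exists>xs. length xs = Suc n \<and> xs ! 0 = u \<and> xs ! n = v
     \<and> (\<forall>j<n. E (xs ! j) (xs ! Suc j)))"

definition connected_graph :: "'a set \<Rightarrow> ('a \<Rightarrow> 'a \<Rightarrow> bool) \<Rightarrow> bool" where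
  "connected_graph V E \<longleftrightarrow> (\<forall>u\<in>V. \<forall>v\<in>V. \<exists>n. walk_of_len E u v n)"

definition gdist :: "('a \<Rightarrow> 'a \<Rightarrow> bool) \<Rightarrow> 'a \<Rightarrow> 'a \<Rightarrow> nat" where
  "gdist E u v = (LEAST n. walk_of_len E u v n)"

definition diam :: "'a set \<Rightarrow> ('a \<Rightarrow> 'a \<Rightarrow> bool) \<Rightarrow> nat" where
  "diam V E = Max {gdist E u v | u v. u \<in> V \<and> v \<in> V}"

definition min_degree :: "'a set \<Rightarrow> ('a \<Rightarrow> 'a \<Rightarrow> bool) \<Rightarrow> nat" where
  "min_degree V E = Min {card {v \<in> V. E u v} | u. u \<in> V}"

definition k_independent :: "'a set \<Rightarrow> ('a \<Rightarrow> 'a \<Rightarrow> bool) \<Rightarrow> nat \<Rightarrow> 'a set \<Rightarrow> bool" where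
  "k_independent V E k S \<longleftrightarrow> S \<subseteq> V \<and> (\<forall>u\<in>S. \<forall>v\<in>S. u \<noteq> v \<longrightarrow> gdist E u v > k)"

definition nbhd :: "'a set \<Rightarrow> ('a \<Rightarrow> 'a \<Rightarrow> bool) \<Rightarrow> 'a set \<Rightarrow> 'a set" where
  "nbhd V E S = {v \<in> V. \<exists>u\<in>S. E u v}"

fun nbhd_pow :: "'a set \<Rightarrow> ('a \<Rightarrow> 'a \<Rightarrow> bool) \<Rightarrow> nat \<Rightarrow> 'a set \<Rightarrow> 'a set" where
  "nbhd_pow V E 0 S = S"
| "nbhd_pow V E (Suc 0) S = nbhd V E S"
| "nbhd_pow V E (Suc (Suc j)) S =
     nbhd V E (nbhd_pow V E (Suc j) S) - (nbhd_pow V E j S \<union> nbhd_pow V E (Suc j) S)"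

end

theory Submission
  imports Defs
begin

lemma walk0: "walk_of_len E u v 0 \<longleftrightarrow> u = v"
proof
  assume "walk_of_len E u v 0"
  then show "u = v" unfolding walk_of_len_def by auto
next
  assume "u = v"
  then show "walk_of_len E u v 0" unfolding walk_of_len_def
    by (intro exI[of _ "[u]"]) auto
qed

lemma walk_Suc: "walk_of_len E u w (Suc n) \<longleftrightarrow> (\<exists>v. walk_of_len E u v n \<and> E v w)"
proof
  assume "walk_of_len E u w (Suc n)"
  then obtain xs where xs: "length xs = Suc (Suc n)" "xs!0 = u" "xs ! Suc n = w"
    "\<forall>j<Suc n. E (xs!j) (xs!Suc j)" unfolding walk_of_len_def by blast
  have "walk_of_len E u (xs!n) n" unfolding walk_of_len_def
    by (rule exI[of _ "take (Suc n) xs"]) (use xs in auto)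
  moreover have "E (xs!n) w" using xs by auto
  ultimately show "\<exists>v. walk_of_len E u v n \<and> E v w" by blast
next
  assume "\<exists>v. walk_of_len E u v n \<and> E v w"
  then obtain v xs where xs: "length xs = Suc n" "xs!0 = u" "xs!n = v"
    "\<forall>j<n. E (xs!j) (xs!Suc j)" "E v w" unfolding walk_of_len_def by blast
  show "walk_of_len E u w (Suc n)" unfolding walk_of_len_def
  proof (rule exI[of _ "xs @ [w]"], intro conjI allI impI)
    show "length (xs @ [w]) = Suc (Suc n)" using xs by simp
    show "(xs @ [w]) ! 0 = u" using xs by (simp add: nth_append)
    show "(xs @ [w]) ! Suc n = w" using xs by (simp add: nth_append)
    fix j assume "j < Suc n"
    then consider "j < n" | "j = n" by linarith
    then show "E ((xs @ [w]) ! j) ((xs @ [w]) ! Suc j)"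
      by cases (use xs in \<open>auto simp: nth_append\<close>)
  qed
qed

lemma walk_cat: "walk_of_len E u v n \<Longrightarrow> walk_of_len E v w m \<Longrightarrow> walk_of_len E u w (n + m)"
proof (induction m arbitrary: w)
  case 0
  then show ?case by (simp add: walk0)
next
  case (Suc m)
  then obtain x where "walk_of_len E v x m" "E x w" by (auto simp: walk_Suc)
  then show ?case using Suc by (auto simp: walk_Suc)
qed

lemma walk_rev:
  assumes sym: "\<forall>u v. E u v \<longrightarrow> E v u"
  shows "walk_of_len E u v n \<Longrightarrow> walk_of_len E v u n"
proof (induction n arbitrary: v)
  case 0
  then show ?case by (simp add: walk0)
next
  case (Suc n)
  then obtain x where x: "walk_of_len E u x n" "E x v" by (auto simp: walk_Suc)
  have "walk_of_len E v x (Suc 0)" using x sym by (auto simp: walk_Suc walk0)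
  from walk_cat[OF this Suc.IH[OF x(1)]] show ?case by simp
qed

lemma gdist_le: "walk_of_len E u v n \<Longrightarrow> gdist E u v \<le> n"
  unfolding gdist_def by (rule Least_le)

lemma gdist_walk:
  assumes "connected_graph V E" "u \<in> V" "v \<in> V"
  shows "walk_of_len E u v (gdist E u v)"
proof -
  from assms obtain n where "walk_of_len E u v n" unfolding connected_graph_def by blast
  then show ?thesis unfolding gdist_def by (rule LeastI)
qed

lemma gdist_sym:
  assumes "simple_graph V E" "connected_graph V E" "u \<in> V" "v \<in> V"
  shows "gdist E u v = gdist E v u"
proof -
  have sym: "\<forall>u v. E u v \<longrightarrow> E v u" using assms(1) unfolding simple_graph_def by blast
  have "gdist E v u \<le> gdist E u v"
    by (rule gdist_le, rule walk_rev[OF sym], rule gdist_walk[OF assms(2-4)])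
  moreover have "gdist E u v \<le> gdist E v u"
    by (rule gdist_le, rule walk_rev[OF sym], rule gdist_walk[OF assms(2,4,3)])
  ultimately show ?thesis by simp
qed

lemma gdist_tri:
  assumes "connected_graph V E" "u \<in> V" "v \<in> V" "w \<in> V"
  shows "gdist E u w \<le> gdist E u v + gdist E v w"
  by (rule gdist_le, rule walk_cat, rule gdist_walk[OF assms(1-3)], rule gdist_walk[OF assms(1,3,4)])

lemma gdist_down:
  assumes sg: "simple_graph V E" and conn: "connected_graph V E" and s: "s \<in> V"
  shows "\<forall>v\<in>V. gdist E s v = n \<longrightarrow> (\<forall>m\<le>n. \<exists>y\<in>V. gdist E s y = m)"
proof (induction n)
  case 0
  then show ?case by auto
next
  case (Suc n)
  show ?case
  proof (intro ballI impI allI)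
    fix v m assume v: "v \<in> V" and g: "gdist E s v = Suc n" and m: "m \<le> Suc n"
    show "\<exists>y\<in>V. gdist E s y = m"
    proof (cases "m = Suc n")
      case True then show ?thesis using v g by blast
    next
      case False
      have "walk_of_len E s v (Suc n)" using gdist_walk[OF conn s v] g by simp
      then obtain w where w: "walk_of_len E s w n" "E w v" by (auto simp: walk_Suc)
      have wV: "w \<in> V" using w(2) sg unfolding simple_graph_def by blast
      have "gdist E s w \<le> n" using gdist_le[OF w(1)] .
      moreover have "gdist E w v \<le> 1"
        using gdist_le[of E w v 1] w(2) by (simp add: walk_Suc walk0)
      moreover have "gdist E s v \<le> gdist E s w + gdist E w v" by (rule gdist_tri[OF conn s wV v])
      ultimately have "gdist E s w = n" using g by linarith
      then show ?thesis using Suc.IH wV False m by auto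
    qed
  qed
qed

definition distS :: "('a \<Rightarrow> 'a \<Rightarrow> bool) \<Rightarrow> 'a set \<Rightarrow> 'a \<Rightarrow> nat" where
  "distS E S v = (LEAST n. \<exists>s\<in>S. walk_of_len E s v n)"

lemma distS_le: "s \<in> S \<Longrightarrow> walk_of_len E s v n \<Longrightarrow> distS E S v \<le> n"
  unfolding distS_def by (rule Least_le) blast

lemma distS_walk:
  assumes "connected_graph V E" "S \<subseteq> V" "S \<noteq> {}" "v \<in> V"
  shows "\<exists>s\<in>S. walk_of_len E s v (distS E S v)"
proof -
  from assms obtain s0 where "s0 \<in> S" by blast
  with assms obtain n where "walk_of_len E s0 v n" unfolding connected_graph_def by blast
  then have "\<exists>n. \<exists>s\<in>S. walk_of_len E s v n" using \<open>s0 \<in> S\<close> by blast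
  then show ?thesis unfolding distS_def by (rule LeastI_ex)
qed

lemma nbhd_pow_char:
  assumes sg: "simple_graph V E" and conn: "connected_graph V E" and SV: "S \<subseteq> V"
    and Sne: "S \<noteq> {}" and noadj: "\<forall>u\<in>S. \<forall>v\<in>S. \<not> E u v"
  shows "nbhd_pow V E j S = {v\<in>V. distS E S v = j}"
proof -
  have sym: "\<And>u v. E u v \<Longrightarrow> E v u" and inV: "\<And>u v. E u v \<Longrightarrow> u \<in> V \<and> v \<in> V"
    using sg unfolding simple_graph_def by blast+
  let ?D = "\<lambda>j. {v\<in>V. distS E S v = j}"
  have D0: "?D 0 = S"
  proof (intro set_eqI iffI)
    fix v assume "v \<in> S"
    then show "v \<in> ?D 0" using SV distS_le[of v S E v 0] by (auto simp: walk0)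
  next
    fix v assume "v \<in> ?D 0"
    then show "v \<in> S" using distS_walk[OF conn SV Sne, of v] by (auto simp: walk0)
  qed
  have D1: "nbhd V E S = ?D 1"
  proof (intro set_eqI iffI)
    fix v assume "v \<in> nbhd V E S"
    then obtain u where u: "u \<in> S" "E u v" "v \<in> V" unfolding nbhd_def by blast
    have "walk_of_len E u v 1" using u by (auto simp: walk_Suc walk0)
    then have "distS E S v \<le> 1" using distS_le[OF u(1)] by blast
    moreover have "distS E S v \<noteq> 0"
    proof
      assume "distS E S v = 0"
      then have "v \<in> ?D 0" using u(3) by simp
      then have "v \<in> S" by (simp only: D0)
      then show False using noadj u(1,2) by blast
    qed
    ultimately show "v \<in> ?D 1" using u by auto
  next
    fix v assume v: "v \<in> ?D 1"
    then obtain s where "s \<in> S" "walk_of_len E s v 1" using distS_walk[OF conn SV Sne, of v] by auto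
    then show "v \<in> nbhd V E S" using v unfolding nbhd_def by (auto simp: walk_Suc walk0)
  qed
  have step: "nbhd V E (?D (Suc j)) - (?D j \<union> ?D (Suc j)) = ?D (Suc (Suc j))" for j
  proof (intro set_eqI iffI)
    fix v assume v: "v \<in> nbhd V E (?D (Suc j)) - (?D j \<union> ?D (Suc j))"
    then obtain w where w: "w \<in> V" "distS E S w = Suc j" "E w v" "v \<in> V"
      unfolding nbhd_def by blast
    obtain s where s: "s \<in> S" "walk_of_len E s w (Suc j)" using distS_walk[OF conn SV Sne w(1)] w by auto
    have "walk_of_len E s v (Suc (Suc j))" using s w by (auto simp: walk_Suc)
    then have le: "distS E S v \<le> Suc (Suc j)" by (rule distS_le[OF s(1)])
    have "\<not> distS E S v < j"
    proof
      assume lt: "distS E S v < j"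
      obtain s' where s': "s' \<in> S" "walk_of_len E s' v (distS E S v)"
        using distS_walk[OF conn SV Sne w(4)] by blast
      have "walk_of_len E s' w (Suc (distS E S v))" using s' w sym by (auto simp: walk_Suc)
      then have "distS E S w \<le> Suc (distS E S v)" by (rule distS_le[OF s'(1)])
      then show False using lt w by linarith
    qed
    then show "v \<in> ?D (Suc (Suc j))" using v le w(4) by auto
  next
    fix v assume v: "v \<in> ?D (Suc (Suc j))"
    obtain s where s: "s \<in> S" "walk_of_len E s v (Suc (Suc j))"
      using distS_walk[OF conn SV Sne, of v] v by auto
    then obtain w where w: "walk_of_len E s w (Suc j)" "E w v" by (auto simp: walk_Suc)
    have wV: "w \<in> V" using inV w(2) by blast
    have le: "distS E S w \<le> Suc j" by (rule distS_le[OF s(1) w(1)])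
    have "\<not> distS E S w < Suc j"
    proof
      assume lt: "distS E S w < Suc j"
      obtain s' where s': "s' \<in> S" "walk_of_len E s' w (distS E S w)"
        using distS_walk[OF conn SV Sne wV] by blast
      have "walk_of_len E s' v (Suc (distS E S w))" using s' w by (auto simp: walk_Suc)
      then have "distS E S v \<le> Suc (distS E S w)" by (rule distS_le[OF s'(1)])
      moreover have "distS E S v = Suc (Suc j)" using v by simp
      ultimately show False using lt by linarith
    qed
    then have "w \<in> ?D (Suc j)" using le wV by auto
    then show "v \<in> nbhd V E (?D (Suc j)) - (?D j \<union> ?D (Suc j))"
      using v w(2) unfolding nbhd_def by auto
  qed
  have "nbhd_pow V E j S = ?D j \<and> nbhd_pow V E (Suc j) S = ?D (Suc j)"
  proof (induction j)
    case 0
    then show ?case using D0 D1 by simp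
  next
    case (Suc j)
    then show ?case using step[of j] by simp
  qed
  then show ?thesis by blast
qed


theorem lemma1:
  fixes V :: "'a set" and E :: "'a \<Rightarrow> 'a \<Rightarrow> bool" and S :: "'a set"
    and k n \<delta> i :: nat
  assumes "simple_graph V E"
    and "card V = n"
    and "connected_graph V E"
    and "0 < k"
    and "diam V E \<ge> k + 1"
    and "\<delta> = min_degree V E"
    and "k_independent V E k S"
    and "3 \<le> i" and "2 * (i + 1) \<le> k"
  shows "card (nbhd_pow V E (i - 1) S) + card (nbhd_pow V E i S) + card (nbhd_pow V E (i + 1) S)
           \<ge> 3 * card S
       \<and> (\<delta> \<ge> 2 \<longrightarrow>
         card (nbhd_pow V E (i - 1) S) + card (nbhd_pow V E i S) + card (nbhd_pow V E (i + 1) S)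
           \<ge> (\<delta> + 1) * card S)"
proof (cases "S = {}")
  case True
  then show ?thesis by simp
next
  case False
  note Sne = False
  have k2: "2 * i + 2 \<le> k" using assms(9) by simp
  have sg: "simple_graph V E" and conn: "connected_graph V E" using assms by auto
  have fin: "finite V" and symall: "\<forall>u v. E u v \<longrightarrow> E v u"
    and inV: "\<And>u v. E u v \<Longrightarrow> u \<in> V \<and> v \<in> V" and irr: "\<And>u. \<not> E u u"
    using sg unfolding simple_graph_def by blast+
  have SV: "S \<subseteq> V" and indep: "\<forall>u\<in>S. \<forall>v\<in>S. u \<noteq> v \<longrightarrow> k < gdist E u v"
    using assms(7) unfolding k_independent_def by auto
  have noadj: "\<forall>u\<in>S. \<forall>v\<in>S. \<not> E u v"
  proof (intro ballI notI)
    fix u v assume uv: "u \<in> S" "v \<in> S" "E u v"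
    then have "u \<noteq> v" using irr by auto
    have "gdist E u v \<le> 1" by (rule gdist_le) (use uv in \<open>simp add: walk_Suc walk0\<close>)
    then show False using indep uv \<open>u \<noteq> v\<close> assms(4) by force
  qed
  define D where "D j = {v\<in>V. distS E S v = j}" for j
  have char: "nbhd_pow V E j S = D j" for j
    unfolding D_def by (rule nbhd_pow_char[OF sg conn SV Sne noadj])
  define T where "T = D (i-1) \<union> D i \<union> D (i+1)"
  have finD: "finite (D j)" for j unfolding D_def using fin by simp
  have finT: "finite T" unfolding T_def using finD by simp
  have sumT: "card (nbhd_pow V E (i - 1) S) + card (nbhd_pow V E i S) + card (nbhd_pow V E (i + 1) S) = card T"
  proof -
    have d1: "D (i-1) \<inter> D i = {}" and d2: "(D (i-1) \<union> D i) \<inter> D (i+1) = {}"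
      using assms(8) unfolding D_def by auto
    have e1: "card (D (i-1) \<union> D i \<union> D (i+1)) = card (D (i-1) \<union> D i) + card (D (i+1))"
      by (rule card_Un_disjoint) (use finD d2 in auto)
    have e2: "card (D (i-1) \<union> D i) = card (D (i-1)) + card (D i)"
      by (rule card_Un_disjoint) (use finD d1 in auto)
    show ?thesis unfolding T_def char e1 e2 by simp
  qed
  define A where "A s = {v\<in>V. i - 1 \<le> gdist E s v \<and> gdist E s v \<le> i + 1}" for s
  have distS_eq: "distS E S v = gdist E s v" if s: "s \<in> S" and v: "v \<in> V" and g: "gdist E s v \<le> i+1" for s v
  proof -
    have sV: "s \<in> V" using SV s by blast
    have ws: "walk_of_len E s v (gdist E s v)" by (rule gdist_walk[OF conn sV v])
    have le: "distS E S v \<le> gdist E s v" by (rule distS_le[OF s ws])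
    obtain s' where s': "s' \<in> S" "walk_of_len E s' v (distS E S v)"
      using distS_walk[OF conn SV Sne v] by blast
    have "gdist E s v \<le> distS E S v"
    proof (cases "s' = s")
      case True then show ?thesis using gdist_le[OF s'(2)] by simp
    next
      case False
      have "walk_of_len E s s' (gdist E s v + distS E S v)"
        by (rule walk_cat[OF ws walk_rev[OF symall s'(2)]])
      then have "gdist E s s' \<le> gdist E s v + distS E S v" by (rule gdist_le)
      moreover have "k < gdist E s s'" using indep s s'(1) False[symmetric] by (metis)
      moreover have "gdist E s v + distS E S v \<le> 2 * i + 2" using add_mono[OF g order_trans[OF le g]] by simp
      ultimately show ?thesis using k2 by linarith
    qed
    with le show ?thesis by simp
  qed
  have AT: "A s \<subseteq> T" if s: "s \<in> S" for s
  proof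
    fix v assume "v \<in> A s"
    then have v: "v \<in> V" "i - 1 \<le> gdist E s v" "gdist E s v \<le> i + 1" unfolding A_def by auto
    have "distS E S v = gdist E s v" by (rule distS_eq[OF s v(1) v(3)])
    then show "v \<in> T" unfolding T_def D_def using v by auto
  qed
  have disj: "A s \<inter> A s' = {}" if ss: "s \<in> S" "s' \<in> S" "s \<noteq> s'" for s s'
  proof (rule ccontr)
    assume "A s \<inter> A s' \<noteq> {}"
    then obtain v where v: "v \<in> V" "gdist E s v \<le> i+1" "gdist E s' v \<le> i+1"
      unfolding A_def by blast
    have sV: "s \<in> V" and s'V: "s' \<in> V" using SV ss by auto
    have "gdist E s s' \<le> gdist E s v + gdist E v s'" by (rule gdist_tri[OF conn sV v(1) s'V])
    moreover have "gdist E v s' = gdist E s' v" by (rule gdist_sym[OF sg conn v(1) s'V])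
    moreover have "k < gdist E s s'" using indep ss by blast
    ultimately show False using v k2 by linarith
  qed
  have finA: "finite (A s)" for s unfolding A_def using fin by simp
  have finS: "finite S" using SV fin finite_subset by blast
  have cardU: "card (\<Union>s\<in>S. A s) = (\<Sum>s\<in>S. card (A s))"
    by (rule card_UN_disjoint[OF finS]) (use finA disj in auto)
  have UT: "card (\<Union>s\<in>S. A s) \<le> card T"
    by (rule card_mono[OF finT]) (use AT in auto)
  have far: "\<exists>v\<in>V. i+1 \<le> gdist E s v" if s: "s \<in> S" for s
  proof -
    let ?M = "{gdist E u v | u v. u \<in> V \<and> v \<in> V}"
    have "?M = (\<lambda>(u,v). gdist E u v) ` (V \<times> V)" by auto
    then have finM: "finite ?M" using fin by simp
    have "?M \<noteq> {}" using SV s by blast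
    then have "Max ?M \<in> ?M" using finM Max_in by blast
    then obtain u w where uw: "u \<in> V" "w \<in> V" "gdist E u w = diam V E" unfolding diam_def by auto
    have sV: "s \<in> V" using SV s by blast
    have "gdist E u w \<le> gdist E u s + gdist E s w" by (rule gdist_tri[OF conn uw(1) sV uw(2)])
    moreover have "gdist E u s = gdist E s u" by (rule gdist_sym[OF sg conn uw(1) sV])
    ultimately have "i+1 \<le> gdist E s u \<or> i+1 \<le> gdist E s w" using uw(3) assms(5) k2 by linarith
    then show ?thesis using uw by blast
  qed
  have lev: "\<exists>y\<in>V. gdist E s y = m" if s: "s \<in> S" and m: "m \<le> i+1" for s m
  proof -
    have sV: "s \<in> V" using SV s by blast
    obtain v where v: "v \<in> V" "i+1 \<le> gdist E s v" using far[OF s] by blast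
    have "\<forall>m\<le>gdist E s v. \<exists>y\<in>V. gdist E s y = m"
      using gdist_down[OF sg conn sV, of "gdist E s v"] v(1) by blast
    then show ?thesis using v(2) m by auto
  qed
  have A3: "3 \<le> card (A s)" if s: "s \<in> S" for s
  proof -
    obtain y1 where y1: "y1 \<in> V" "gdist E s y1 = i - 1" using lev[OF s, of "i - 1"] by (metis diff_le_self le_add1 le_trans)
    obtain y2 where y2: "y2 \<in> V" "gdist E s y2 = i" using lev[OF s, of "i"] by auto
    obtain y3 where y3: "y3 \<in> V" "gdist E s y3 = i + 1" using lev[OF s, of "i+1"] by auto
    have sub: "{y1,y2,y3} \<subseteq> A s" unfolding A_def using y1 y2 y3 by auto
    have "y1 \<noteq> y2" "y1 \<noteq> y3" "y2 \<noteq> y3" using y1 y2 y3 assms(8) by auto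
    then have "card {y1,y2,y3} = 3" by simp
    then show ?thesis using card_mono[OF finA sub] by simp
  qed
  have Ad: "min_degree V E + 1 \<le> card (A s)" if s: "s \<in> S" for s
  proof -
    have sV: "s \<in> V" using SV s by blast
    obtain y where y: "y \<in> V" "gdist E s y = i" using lev[OF s, of "i"] by auto
    let ?N = "{v\<in>V. E y v}"
    have "{card {v\<in>V. E u v} | u. u \<in> V} = (\<lambda>u. card {v\<in>V. E u v}) ` V" by auto
    then have finC: "finite {card {v\<in>V. E u v} | u. u \<in> V}" using fin by simp
    have md: "min_degree V E \<le> card ?N" unfolding min_degree_def
      by (rule Min_le[OF finC]) (use y in blast)
    have wy: "walk_of_len E s y i" using gdist_walk[OF conn sV y(1)] y(2) by simp
    have sub: "insert y ?N \<subseteq> A s"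
    proof
      fix w assume "w \<in> insert y ?N"
      then consider "w = y" | "w \<in> V" "E y w" by auto
      then show "w \<in> A s"
      proof cases
        case 1 then show ?thesis unfolding A_def using y by auto
      next
        case 2
        have "walk_of_len E s w (Suc i)" using wy 2 by (auto simp: walk_Suc)
        then have a: "gdist E s w \<le> Suc i" by (rule gdist_le)
        have "walk_of_len E w y 1" using 2 symall by (auto simp: walk_Suc walk0)
        then have "gdist E w y \<le> 1" by (rule gdist_le)
        moreover have "gdist E s y \<le> gdist E s w + gdist E w y" by (rule gdist_tri[OF conn sV 2(1) y(1)])
        ultimately have "i - 1 \<le> gdist E s w" using y(2) by linarith
        then show ?thesis unfolding A_def using a 2 by auto
      qed
    qed
    have "y \<notin> ?N" using irr by auto
    then have "card (insert y ?N) = card ?N + 1" using fin by simp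
    then show ?thesis using card_mono[OF finA sub] md by simp
  qed
  have lowc: "c * card S \<le> card T" if "\<And>s. s \<in> S \<Longrightarrow> c \<le> card (A s)" for c
  proof -
    have "c * card S = (\<Sum>s\<in>S. c)" by simp
    also have "\<dots> \<le> (\<Sum>s\<in>S. card (A s))" by (rule sum_mono) (use that in auto)
    finally show ?thesis using cardU UT by linarith
  qed
  have "3 * card S \<le> card T" by (rule lowc) (rule A3)
  moreover have "(\<delta> + 1) * card S \<le> card T" by (rule lowc) (use Ad assms(6) in auto)
  ultimately show ?thesis using sumT by simp
qed

end
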